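(* Let $D$ be an integral domain, $S$ a multiplicative subset of $D$, and $M$ a torsion-free $D$-module which is a $w$-module. Let $w$ denote the $w$-operation on $D$-modules and $\overline{w}$ the $w$-operation on $D_S$-modules. Let $L$ be a nonzero $D$-submodule of $M$. Then: (1) If $L$ is a $w$-submodule of $M$, then $L_S\cap M$ is a $w$-submodule of $M$. (2) If $L_S$ is a $\overline{w}$-submodule of $M_S$, then $L_S\cap M$ is a $w$-submodule of $M$. (3) $(L_w)_S\subseteq (L_S)_{\overline{w}}$ and $((L_w)_S)_{\overline{w}}=(L_S)_{\overline{w}}$.
   Context: Let $K$ be the quotient field of $D$. For a nonzero fractional ideal $I$, $I^{-1}=\{a\in K\mid aI\subseteq D\}$, $I_v=(I^{-1})^{-1}$. $J\in\mathrm{GV}(D)$ means $J$ is a finitely generated ideal of $D$ with $J_v=D$. For a torsion-free $D$-module $N$, $N_w=\{x\in N\otimes_D K\mid xJ\subseteq N\text{ for some }J\in\mathrm{GV}(D)\}$; $N$ is a $w$-module if $N_w=N$; a submodule $L$ of $M$ is a $w$-submodule if $L_w=L$. The $\overline{w}$-operation is defined analogously over the domain $D_S$ using $\mathrm{GV}(D_S)$. $M$ is identified with its image in $M_S$, and $L_S\cap M$ is taken inside $M_S$. *)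

theory Defs
  imports Main "HOL.Vector_Spaces"
begin

text \<open>The quotient field K of D is the type 'k (a field); D is a subring of 'k
whose fraction field is all of 'k. A torsion-free D-module N is identified with its image in
the K-vector space N (x) K; all modules live inside one K-vector space 'v with scalar
multiplication scale. For a D-submodule N of 'v, N (x)_D K is the K-span of N.\<close>

definition is_subring :: "'k::field set \<Rightarrow> bool" where
  "is_subring R \<longleftrightarrow> 0 \<in> R \<and> 1 \<in> R \<and> (\<forall>a\<in>R. \<forall>b\<in>R. a + b \<in> R \<and> a - b \<in> R \<and> a * b \<in> R)"

definition has_quotient_field :: "'k::field set \<Rightarrow> bool" where
  "has_quotient_field R \<longleftrightarrow> (\<forall>x::'k. \<exists>a\<in>R. \<exists>b\<in>R. b \<noteq> 0 \<and> x = a / b)"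

definition mult_subset :: "'k::field set \<Rightarrow> 'k set \<Rightarrow> bool" where
  "mult_subset R S \<longleftrightarrow> S \<subseteq> R \<and> 1 \<in> S \<and> 0 \<notin> S \<and> (\<forall>s\<in>S. \<forall>t\<in>S. s * t \<in> S)"

definition loc_ring :: "'k::field set \<Rightarrow> 'k set \<Rightarrow> 'k set" where
  "loc_ring R S = {a / s | a s. a \<in> R \<and> s \<in> S}"

definition loc_mod :: "('k::field \<Rightarrow> 'v \<Rightarrow> 'v) \<Rightarrow> 'k set \<Rightarrow> 'v set \<Rightarrow> 'v set" where
  "loc_mod scale S N = {scale (inverse s) x | x s. x \<in> N \<and> s \<in> S}"

definition is_submod :: "('k::field \<Rightarrow> 'v::ab_group_add \<Rightarrow> 'v) \<Rightarrow> 'k set \<Rightarrow> 'v set \<Rightarrow> bool" where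
  "is_submod scale R N \<longleftrightarrow> 0 \<in> N \<and> (\<forall>x\<in>N. \<forall>y\<in>N. x + y \<in> N) \<and> (\<forall>r\<in>R. \<forall>x\<in>N. scale r x \<in> N)"

definition frac_inv :: "'k::field set \<Rightarrow> 'k set \<Rightarrow> 'k set" where
  "frac_inv R I = {a. \<forall>x\<in>I. a * x \<in> R}"

definition v_op :: "'k::field set \<Rightarrow> 'k set \<Rightarrow> 'k set" where
  "v_op R I = frac_inv R (frac_inv R I)"

definition is_ideal :: "'k::field set \<Rightarrow> 'k set \<Rightarrow> bool" where
  "is_ideal R J \<longleftrightarrow> J \<subseteq> R \<and> 0 \<in> J \<and> (\<forall>x\<in>J. \<forall>y\<in>J. x + y \<in> J) \<and> (\<forall>r\<in>R. \<forall>x\<in>J. r * x \<in> J)"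

definition fin_gen_ideal :: "'k::field set \<Rightarrow> 'k set \<Rightarrow> bool" where
  "fin_gen_ideal R J \<longleftrightarrow> is_ideal R J \<and>
     (\<exists>F. finite F \<and> F \<subseteq> R \<and> J = {\<Sum>f\<in>F. c f * f | c. \<forall>f\<in>F. c f \<in> R})"

definition GV :: "'k::field set \<Rightarrow> 'k set set" where
  "GV R = {J. fin_gen_ideal R J \<and> v_op R J = R}"

text \<open>w-closure of a module N over the ring R (R = D gives w, R = D_S gives w-bar).\<close>
definition w_cl :: "('k::field \<Rightarrow> 'v::ab_group_add \<Rightarrow> 'v) \<Rightarrow> 'k set \<Rightarrow> 'v set \<Rightarrow> 'v set" where
  "w_cl scale R N = {x \<in> module.span scale N. \<exists>J\<in>GV R. \<forall>j\<in>J. scale j x \<in> N}"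

end

theory Submission imports Defs begin
lemma sum_closed:
  assumes "0 \<in> A" "\<And>a b. a \<in> A \<Longrightarrow> b \<in> A \<Longrightarrow> a + b \<in> A" "\<And>i. i \<in> I \<Longrightarrow> g i \<in> A"
  shows "sum g I \<in> A"
  using assms(3)
proof (induction I rule: infinite_finite_induct)
  case (infinite A) then show ?case using assms(1) by simp
next
  case empty then show ?case using assms(1) by simp
next
  case (insert x F) then show ?case using assms(2) by simp
qed

definition gen :: "'k::field set \<Rightarrow> 'k set \<Rightarrow> 'k set" where
  "gen R F = {\<Sum>f\<in>F. c f * f | c. \<forall>f\<in>F. c f \<in> R}"

definition gvF :: "'k::field set \<Rightarrow> 'k set \<Rightarrow> bool" where
  "gvF R F \<longleftrightarrow> finite F \<and> F \<subseteq> R \<and> (\<forall>a. (\<forall>f\<in>F. a * f \<in> R) \<longrightarrow> a \<in> R)"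

lemma gen_sub: assumes R: "is_subring R" "F \<subseteq> R" shows "gen R F \<subseteq> R"
proof
  fix x assume "x \<in> gen R F"
  then obtain c where x: "x = (\<Sum>f\<in>F. c f * f)" "\<forall>f\<in>F. c f \<in> R" unfolding gen_def by blast
  show "x \<in> R" unfolding x(1) by (rule sum_closed) (use R x(2) in \<open>auto simp: is_subring_def\<close>)
qed

lemma gen_base: assumes "finite F" "f \<in> F" "is_subring R" shows "f \<in> gen R F"
proof -
  let ?c = "\<lambda>g. if g = f then 1 else (0::'a)"
  have "(\<Sum>g\<in>F. ?c g * g) = (\<Sum>g\<in>F. if g = f then g else 0)" by (rule sum.cong) simp_all
  also have "\<dots> = f" using assms(1,2) by simp
  finally have "(\<Sum>g\<in>F. ?c g * g) = f" .
  moreover have "\<forall>g\<in>F. ?c g \<in> R" using assms(3) by (auto simp: is_subring_def)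
  ultimately have "f = (\<Sum>g\<in>F. ?c g * g) \<and> (\<forall>g\<in>F. ?c g \<in> R)" by simp
  then show ?thesis unfolding gen_def mem_Collect_eq by (rule exI[where x = ?c])
qed

lemma frac_inv_gen:
  assumes R: "is_subring R" and F: "finite F" "F \<subseteq> R"
  shows "frac_inv R (gen R F) = {a. \<forall>f\<in>F. a * f \<in> R}"
proof
  show "frac_inv R (gen R F) \<subseteq> {a. \<forall>f\<in>F. a * f \<in> R}"
    using gen_base[OF F(1) _ R] unfolding frac_inv_def by blast
  show "{a. \<forall>f\<in>F. a * f \<in> R} \<subseteq> frac_inv R (gen R F)"
  proof (clarsimp simp: frac_inv_def gen_def)
    fix a c assume a: "\<forall>f\<in>F. a * f \<in> R" and c: "\<forall>f\<in>F. c f \<in> R"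
    have "a * (\<Sum>f\<in>F. c f * f) = (\<Sum>f\<in>F. c f * (a * f))" by (simp add: sum_distrib_left ac_simps)
    also have "\<dots> \<in> R" by (rule sum_closed) (use R a c in \<open>auto simp: is_subring_def\<close>)
    finally show "a * (\<Sum>f\<in>F. c f * f) \<in> R" .
  qed
qed

lemma frac_inv_R: assumes "is_subring R" shows "frac_inv R R = R"
proof
  show "frac_inv R R \<subseteq> R"
  proof
    fix a assume "a \<in> frac_inv R R"
    then have "a * 1 \<in> R" using assms unfolding frac_inv_def is_subring_def by blast
    then show "a \<in> R" by simp
  qed
  show "R \<subseteq> frac_inv R R" using assms unfolding frac_inv_def is_subring_def by auto
qed

lemma frac_inv_anti: "A \<subseteq> B \<Longrightarrow> frac_inv R B \<subseteq> frac_inv R A"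
  unfolding frac_inv_def by auto

lemma frac_inv_triple: "frac_inv R (v_op R A) = frac_inv R A"
proof
  have "A \<subseteq> v_op R A" unfolding v_op_def frac_inv_def by (auto simp: mult.commute)
  then show "frac_inv R (v_op R A) \<subseteq> frac_inv R A" by (rule frac_inv_anti)
  show "frac_inv R A \<subseteq> frac_inv R (v_op R A)" unfolding v_op_def frac_inv_def by (auto simp: mult.commute)
qed

lemma is_ideal_gen: assumes R: "is_subring R" "F \<subseteq> R" shows "is_ideal R (gen R F)"
  unfolding is_ideal_def
proof (intro conjI ballI)
  show "gen R F \<subseteq> R" by (rule gen_sub[OF R])
  have "0 = (\<Sum>f\<in>F. (\<lambda>_. 0::'a) f * f) \<and> (\<forall>f\<in>F. (\<lambda>_. 0::'a) f \<in> R)"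
    using R unfolding is_subring_def by simp
  then show "0 \<in> gen R F" unfolding gen_def mem_Collect_eq by (rule exI[where x = "\<lambda>_. 0"])
  fix x y assume "x \<in> gen R F" "y \<in> gen R F"
  then obtain c d where x: "x = (\<Sum>f\<in>F. c f * f)" "\<forall>f\<in>F. c f \<in> R"
     and y: "y = (\<Sum>f\<in>F. d f * f)" "\<forall>f\<in>F. d f \<in> R" unfolding gen_def by blast
  have "x + y = (\<Sum>f\<in>F. (c f + d f) * f)" unfolding x y by (simp add: sum.distrib algebra_simps)
  moreover have "\<forall>f\<in>F. c f + d f \<in> R" using x y R by (auto simp: is_subring_def)
  ultimately show "x + y \<in> gen R F" unfolding gen_def mem_Collect_eq
    by (intro exI[where x = "\<lambda>f. c f + d f"]) simp
next
  fix r x assume r: "r \<in> R" and "x \<in> gen R F"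
  then obtain c where x: "x = (\<Sum>f\<in>F. c f * f)" "\<forall>f\<in>F. c f \<in> R" unfolding gen_def by blast
  have "r * x = (\<Sum>f\<in>F. (r * c f) * f)" unfolding x by (simp add: sum_distrib_left ac_simps)
  moreover have "\<forall>f\<in>F. r * c f \<in> R" using x r R by (auto simp: is_subring_def)
  ultimately show "r * x \<in> gen R F" unfolding gen_def mem_Collect_eq
    by (intro exI[where x = "\<lambda>f. r * c f"]) simp
qed

lemma GV_gvF: assumes R: "is_subring R" and J: "J \<in> GV R"
  shows "\<exists>F. gvF R F \<and> J = gen R F"
proof -
  from J obtain F where F: "finite F" "F \<subseteq> R" "J = gen R F" and v: "v_op R J = R"
    unfolding GV_def fin_gen_ideal_def gen_def by blast
  have "frac_inv R J = R" using frac_inv_triple[of R J] v frac_inv_R[OF R] by simp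
  then have "\<forall>a. (\<forall>f\<in>F. a * f \<in> R) \<longrightarrow> a \<in> R" using frac_inv_gen[OF R F(1,2)] F(3) by auto
  with F show ?thesis unfolding gvF_def by blast
qed

lemma gvF_GV: assumes R: "is_subring R" and G: "gvF R F" shows "gen R F \<in> GV R"
proof -
  have F: "finite F" "F \<subseteq> R" using G by (auto simp: gvF_def)
  have "frac_inv R (gen R F) = R"
  proof
    show "frac_inv R (gen R F) \<subseteq> R" using frac_inv_gen[OF R F] G by (auto simp: gvF_def)
    show "R \<subseteq> frac_inv R (gen R F)" using gen_sub[OF R F(2)] R
      unfolding frac_inv_def is_subring_def by blast
  qed
  then have "v_op R (gen R F) = R" unfolding v_op_def using frac_inv_R[OF R] by simp
  moreover have "fin_gen_ideal R (gen R F)" unfolding fin_gen_ideal_def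
    using is_ideal_gen[OF R F(2)] F unfolding gen_def by blast
  ultimately show ?thesis unfolding GV_def by blast
qed

lemma gvF_one: "is_subring R \<Longrightarrow> gvF R {1}"
  unfolding gvF_def is_subring_def by auto

lemma gvF_mult: assumes R: "is_subring R" and F: "gvF R F" and G: "gvF R G"
  shows "gvF R ((\<lambda>(f,g). f * g) ` (F \<times> G))"
  unfolding gvF_def
proof (intro conjI allI impI)
  show "finite ((\<lambda>(f,g). f * g) ` (F \<times> G))" using F G by (auto simp: gvF_def)
  show "(\<lambda>(f,g). f * g) ` (F \<times> G) \<subseteq> R"
  proof (clarsimp)
    fix f g assume "f \<in> F" "g \<in> G"
    then have "f \<in> R" "g \<in> R" using F G unfolding gvF_def by blast+
    then show "f * g \<in> R" using R unfolding is_subring_def by blast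
  qed
  fix a assume a: "\<forall>h\<in>(\<lambda>(f,g). f * g) ` (F \<times> G). a * h \<in> R"
  have "\<forall>f\<in>F. a * f \<in> R"
  proof
    fix f assume f: "f \<in> F"
    have "\<forall>g\<in>G. (a * f) * g \<in> R"
    proof
      fix g assume "g \<in> G"
      then show "(a * f) * g \<in> R" using a f by (simp add: mult.assoc)
    qed
    then show "a * f \<in> R" using G by (auto simp: gvF_def)
  qed
  then show "a \<in> R" using F by (auto simp: gvF_def)
qed

lemma w_cl_iff:
  assumes vs: "vector_space scale" and R: "is_subring R" and N: "is_submod scale R N"
  shows "x \<in> w_cl scale R N \<longleftrightarrow> x \<in> module.span scale N \<and> (\<exists>F. gvF R F \<and> (\<forall>f\<in>F. scale f x \<in> N))"
proof -
  interpret vector_space scale by (rule vs)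
  show ?thesis
  proof
    assume "x \<in> w_cl scale R N"
    then obtain J where x: "x \<in> span N" and J: "J \<in> GV R" and JN: "\<forall>j\<in>J. scale j x \<in> N"
      unfolding w_cl_def by blast
    obtain F where F: "gvF R F" and JF: "J = gen R F" using GV_gvF[OF R J] by blast
    have "\<forall>f\<in>F. scale f x \<in> N" using JN gen_base[OF _ _ R] F JF by (auto simp: gvF_def)
    with x F show "x \<in> span N \<and> (\<exists>F. gvF R F \<and> (\<forall>f\<in>F. scale f x \<in> N))" by blast
  next
    assume "x \<in> span N \<and> (\<exists>F. gvF R F \<and> (\<forall>f\<in>F. scale f x \<in> N))"
    then obtain F where x: "x \<in> span N" and F: "gvF R F" and FN: "\<forall>f\<in>F. scale f x \<in> N" by blast
    have "\<forall>j\<in>gen R F. scale j x \<in> N"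
    proof
      fix j assume "j \<in> gen R F"
      then obtain c where j: "j = (\<Sum>f\<in>F. c f * f)" "\<forall>f\<in>F. c f \<in> R" unfolding gen_def by blast
      have "scale j x = (\<Sum>f\<in>F. scale (c f) (scale f x))" unfolding j(1) scale_sum_left by simp
      also have "\<dots> \<in> N" by (rule sum_closed) (use N j(2) FN in \<open>auto simp: is_submod_def simp del: scale_scale\<close>)
      finally show "scale j x \<in> N" .
    qed
    with x gvF_GV[OF R F] show "x \<in> w_cl scale R N" unfolding w_cl_def by blast
  qed
qed

lemma S_facts: "mult_subset D S \<Longrightarrow> s \<in> S \<Longrightarrow> s \<noteq> 0 \<and> s \<in> D"
  unfolding mult_subset_def by auto

lemma loc_ring_iff:
  assumes S: "mult_subset D S"
  shows "a \<in> loc_ring D S \<longleftrightarrow> (\<exists>s\<in>S. s * a \<in> D)"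
proof
  assume "a \<in> loc_ring D S"
  then obtain b s where "a = b / s" "b \<in> D" "s \<in> S" unfolding loc_ring_def by blast
  then show "\<exists>s\<in>S. s * a \<in> D" using S_facts[OF S] by force
next
  assume "\<exists>s\<in>S. s * a \<in> D"
  then obtain s where s: "s \<in> S" "s * a \<in> D" by blast
  then have "a = (s * a) / s" using S_facts[OF S s(1)] by simp
  then show "a \<in> loc_ring D S" unfolding loc_ring_def using s by blast
qed

lemma loc_ring_subring:
  assumes D: "is_subring D" and S: "mult_subset D S"
  shows "is_subring (loc_ring D S)" "D \<subseteq> loc_ring D S"
proof -
  have Dc: "0 \<in> D" "1 \<in> D" "\<And>a b. a \<in> D \<Longrightarrow> b \<in> D \<Longrightarrow> a + b \<in> D \<and> a - b \<in> D \<and> a * b \<in> D"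
    using D unfolding is_subring_def by auto
  have S1: "1 \<in> S" and Sm: "\<And>s t. s \<in> S \<Longrightarrow> t \<in> S \<Longrightarrow> s * t \<in> S"
    using S unfolding mult_subset_def by auto
  show sub: "D \<subseteq> loc_ring D S"
  proof
    fix a assume "a \<in> D" then have "1 * a \<in> D" by simp
    with S1 show "a \<in> loc_ring D S" unfolding loc_ring_iff[OF S] by blast
  qed
  show "is_subring (loc_ring D S)" unfolding is_subring_def
  proof (intro conjI ballI)
    show "0 \<in> loc_ring D S" "1 \<in> loc_ring D S" using sub Dc by auto
    fix a b assume "a \<in> loc_ring D S" "b \<in> loc_ring D S"
    then obtain s t where st: "s \<in> S" "s * a \<in> D" "t \<in> S" "t * b \<in> D" unfolding loc_ring_iff[OF S] by blast
    have "t \<in> D" "s \<in> D" using st S_facts[OF S] by auto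
    have e1: "(s * t) * (a + b) = t * (s * a) + s * (t * b)" by (simp add: algebra_simps)
    have e2: "(s * t) * (a - b) = t * (s * a) - s * (t * b)" by (simp add: algebra_simps)
    have e3: "(s * t) * (a * b) = (s * a) * (t * b)" by (simp add: algebra_simps)
    show "a + b \<in> loc_ring D S" unfolding loc_ring_iff[OF S]
      using Sm[OF st(1,3)] e1 Dc(3) st \<open>t \<in> D\<close> \<open>s \<in> D\<close> by metis
    show "a - b \<in> loc_ring D S" unfolding loc_ring_iff[OF S]
      using Sm[OF st(1,3)] e2 Dc(3) st \<open>t \<in> D\<close> \<open>s \<in> D\<close> by metis
    show "a * b \<in> loc_ring D S" unfolding loc_ring_iff[OF S]
      using Sm[OF st(1,3)] e3 Dc(3) st by metis
  qed
qed

lemma loc_mod_iff: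
  assumes vs: "vector_space scale" and S: "mult_subset D S"
  shows "y \<in> loc_mod scale S L \<longleftrightarrow> (\<exists>s\<in>S. scale s y \<in> L)"
proof -
  interpret vector_space scale by (rule vs)
  show ?thesis
  proof
    assume "y \<in> loc_mod scale S L"
    then obtain x s where "y = scale (inverse s) x" "x \<in> L" "s \<in> S" unfolding loc_mod_def by blast
    then show "\<exists>s\<in>S. scale s y \<in> L" using S_facts[OF S] by force
  next
    assume "\<exists>s\<in>S. scale s y \<in> L"
    then obtain s where s: "s \<in> S" "scale s y \<in> L" by blast
    then have "y = scale (inverse s) (scale s y)" using S_facts[OF S s(1)] by simp
    then show "y \<in> loc_mod scale S L" unfolding loc_mod_def using s by blast
  qed
qed

lemma loc_mod_submod:
  assumes vs: "vector_space scale" and D: "is_subring D" and S: "mult_subset D S"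
    and L: "is_submod scale D L"
  shows "is_submod scale (loc_ring D S) (loc_mod scale S L)" "L \<subseteq> loc_mod scale S L"
proof -
  interpret vector_space scale by (rule vs)
  have S1: "1 \<in> S" and Sm: "\<And>s t. s \<in> S \<Longrightarrow> t \<in> S \<Longrightarrow> s * t \<in> S"
    using S unfolding mult_subset_def by auto
  have Lc: "0 \<in> L" "\<And>x y. x \<in> L \<Longrightarrow> y \<in> L \<Longrightarrow> x + y \<in> L" "\<And>r x. r \<in> D \<Longrightarrow> x \<in> L \<Longrightarrow> scale r x \<in> L"
    using L unfolding is_submod_def by auto
  show sub: "L \<subseteq> loc_mod scale S L"
  proof
    fix a assume "a \<in> L" then have "scale 1 a \<in> L" by simp
    with S1 show "a \<in> loc_mod scale S L" unfolding loc_mod_iff[OF vs S] by blast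
  qed
  show "is_submod scale (loc_ring D S) (loc_mod scale S L)" unfolding is_submod_def
  proof (intro conjI ballI)
    show "0 \<in> loc_mod scale S L" using sub Lc by auto
    fix x y assume "x \<in> loc_mod scale S L" "y \<in> loc_mod scale S L"
    then obtain s t where st: "s \<in> S" "scale s x \<in> L" "t \<in> S" "scale t y \<in> L"
      unfolding loc_mod_iff[OF vs S] by blast
    have "scale (s * t) (x + y) = scale t (scale s x) + scale s (scale t y)"
      by (simp add: scale_right_distrib mult.commute)
    also have "\<dots> \<in> L"
    proof -
      have a1: "scale t (scale s x) \<in> L" using Lc st S_facts[OF S] by blast
      have a2: "scale s (scale t y) \<in> L" using Lc st S_facts[OF S] by blast
      show ?thesis by (rule Lc(2)[OF a1 a2])
    qed
    finally show "x + y \<in> loc_mod scale S L" unfolding loc_mod_iff[OF vs S] using Sm[OF st(1,3)] by blast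
  next
    fix a x assume "a \<in> loc_ring D S" "x \<in> loc_mod scale S L"
    then obtain s t where st: "t \<in> S" "t * a \<in> D" "s \<in> S" "scale s x \<in> L"
      unfolding loc_mod_iff[OF vs S] loc_ring_iff[OF S] by blast
    have "scale (t * s) (scale a x) = scale (t * a) (scale s x)"
      by (simp add: mult.commute mult.left_commute)
    also have "\<dots> \<in> L" using Lc st by blast
    finally show "scale a x \<in> loc_mod scale S L" unfolding loc_mod_iff[OF vs S] using Sm[OF st(1,3)] by blast
  qed
qed

lemma loc_mod_fin:
  assumes vs: "vector_space scale" and S: "mult_subset D S" and L: "is_submod scale D L"
    and F: "finite F"
  shows "(\<forall>f\<in>F. P f \<in> loc_mod scale S L) \<Longrightarrow> \<exists>s\<in>S. \<forall>f\<in>F. scale s (P f) \<in> L"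
  using F
proof (induction F rule: finite_induct)
  case empty then show ?case using S unfolding mult_subset_def by auto
next
  case (insert g F)
  interpret vector_space scale by (rule vs)
  obtain s where s: "s \<in> S" "\<forall>f\<in>F. scale s (P f) \<in> L" using insert by auto
  obtain t where t: "t \<in> S" "scale t (P g) \<in> L" using insert.prems loc_mod_iff[OF vs S] by auto
  have Lc: "\<And>r x. r \<in> D \<Longrightarrow> x \<in> L \<Longrightarrow> scale r x \<in> L" using L unfolding is_submod_def by auto
  have "\<forall>f\<in>insert g F. scale (t * s) (P f) \<in> L"
  proof
    fix f assume "f \<in> insert g F"
    then show "scale (t * s) (P f) \<in> L"
    proof
      assume "f = g"
      have X: "scale s (scale t (P g)) \<in> L" using Lc S_facts[OF S s(1)] t by blast
      then show ?thesis using X \<open>f = g\<close> by (simp add: mult.commute)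
    next
      assume "f \<in> F"
      have X: "scale t (scale s (P f)) \<in> L" using Lc S_facts[OF S t(1)] s \<open>f \<in> F\<close> by blast
      then show ?thesis by (simp only: scale_scale)
    qed
  qed
  moreover have "t * s \<in> S" using S s t unfolding mult_subset_def by auto
  ultimately show ?case by blast
qed

lemma loc_ring_fin:
  assumes D: "is_subring D" and S: "mult_subset D S" and F: "finite F"
  shows "(\<forall>f\<in>F. P f \<in> loc_ring D S) \<Longrightarrow> \<exists>s\<in>S. \<forall>f\<in>F. s * P f \<in> D"
  using F
proof (induction F rule: finite_induct)
  case empty then show ?case using S unfolding mult_subset_def by auto
next
  case (insert g F)
  obtain s where s: "s \<in> S" "\<forall>f\<in>F. s * P f \<in> D" using insert by auto
  obtain t where t: "t \<in> S" "t * P g \<in> D" using insert.prems loc_ring_iff[OF S] by auto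
  have Dc: "\<And>a b. a \<in> D \<Longrightarrow> b \<in> D \<Longrightarrow> a * b \<in> D" using D unfolding is_subring_def by auto
  have "\<forall>f\<in>insert g F. (t * s) * P f \<in> D"
  proof
    fix f assume "f \<in> insert g F"
    then show "(t * s) * P f \<in> D"
    proof
      assume "f = g"
      have X: "s * (t * P g) \<in> D" using Dc S_facts[OF S s(1)] t by blast
      then show ?thesis using X \<open>f = g\<close> by (simp add: ac_simps)
    next
      assume "f \<in> F"
      have X: "t * (s * P f) \<in> D" using Dc S_facts[OF S t(1)] s \<open>f \<in> F\<close> by blast
      then show ?thesis by (simp only: mult.assoc)
    qed
  qed
  moreover have "t * s \<in> S" using S s t unfolding mult_subset_def by auto
  ultimately show ?case by blast
qed

lemma gvF_loc:
  assumes D: "is_subring D" and S: "mult_subset D S" and F: "gvF D F"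
  shows "gvF (loc_ring D S) F"
  unfolding gvF_def
proof (intro conjI allI impI)
  show "finite F" using F by (simp add: gvF_def)
  show "F \<subseteq> loc_ring D S" using F loc_ring_subring(2)[OF D S] by (auto simp: gvF_def)
  fix a assume "\<forall>f\<in>F. a * f \<in> loc_ring D S"
  then obtain s where s: "s \<in> S" "\<forall>f\<in>F. s * (a * f) \<in> D"
    using loc_ring_fin[OF D S, of F "\<lambda>f. a * f"] F by (auto simp: gvF_def)
  then have "s * a \<in> D" using F unfolding gvF_def by (simp add: mult.assoc)
  then show "a \<in> loc_ring D S" using s(1) loc_ring_iff[OF S] by blast
qed

lemma gvF_family:
  assumes vs: "vector_space scale" and R: "is_subring R" and A: "is_submod scale R A"
    and G: "finite G"
  shows "(\<forall>g\<in>G. \<exists>F. gvF R F \<and> (\<forall>f\<in>F. scale f (scale g x) \<in> A))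
     \<Longrightarrow> \<exists>H. gvF R H \<and> (\<forall>g\<in>G. \<forall>h\<in>H. scale h (scale g x) \<in> A)"
  using G
proof (induction G rule: finite_induct)
  case empty then show ?case using gvF_one[OF R] by blast
next
  case (insert g G)
  interpret vector_space scale by (rule vs)
  obtain H where H: "gvF R H" "\<forall>g\<in>G. \<forall>h\<in>H. scale h (scale g x) \<in> A" using insert by auto
  obtain F where F: "gvF R F" "\<forall>f\<in>F. scale f (scale g x) \<in> A" using insert.prems by auto
  have Ac: "\<And>r y. r \<in> R \<Longrightarrow> y \<in> A \<Longrightarrow> scale r y \<in> A" using A unfolding is_submod_def by auto
  let ?P = "(\<lambda>(f,g). f * g) ` (H \<times> F)"
  have "gvF R ?P" by (rule gvF_mult[OF R H(1) F(1)])
  moreover have "\<forall>g'\<in>insert g G. \<forall>p\<in>?P. scale p (scale g' x) \<in> A"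
  proof (intro ballI)
    fix g' p assume g': "g' \<in> insert g G" and "p \<in> ?P"
    then obtain h f where p: "p = h * f" "h \<in> H" "f \<in> F" by auto
    have hR: "h \<in> R" "f \<in> R" using p H F by (auto simp: gvF_def)
    from g' show "scale p (scale g' x) \<in> A"
    proof
      assume "g' = g"
      have X: "scale h (scale f (scale g x)) \<in> A" using Ac hR F p by blast
      then show ?thesis using \<open>g' = g\<close> p by (simp add: ac_simps)
    next
      assume "g' \<in> G"
      have X: "scale f (scale h (scale g' x)) \<in> A" using Ac hR H p \<open>g' \<in> G\<close> by blast
      then show ?thesis using p by (simp add: ac_simps)
    qed
  qed
  ultimately show ?case by blast
qed

lemma w_cl_dest:
  assumes vs: "vector_space scale" and R: "is_subring R" and x: "x \<in> w_cl scale R N"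
  shows "x \<in> module.span scale N \<and> (\<exists>F. gvF R F \<and> (\<forall>f\<in>F. scale f x \<in> N))"
proof -
  obtain J where x: "x \<in> module.span scale N" and J: "J \<in> GV R" and JN: "\<forall>j\<in>J. scale j x \<in> N"
    using x unfolding w_cl_def by blast
  obtain F where F: "gvF R F" and JF: "J = gen R F" using GV_gvF[OF R J] by blast
  have "\<forall>f\<in>F. scale f x \<in> N" using JN gen_base[OF _ _ R] F JF by (auto simp: gvF_def)
  with x F show ?thesis by blast
qed

lemma w_cl_mono:
  assumes vs: "vector_space scale" and AB: "A \<subseteq> B"
  shows "w_cl scale R A \<subseteq> w_cl scale R B"
proof -
  interpret vector_space scale by (rule vs)
  show ?thesis using span_mono[OF AB] AB unfolding w_cl_def by blast
qed

lemma w_cl_sup: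
  assumes vs: "vector_space scale" and R: "is_subring R" and N: "is_submod scale R N"
  shows "N \<subseteq> w_cl scale R N"
proof
  interpret vector_space scale by (rule vs)
  fix x assume x: "x \<in> N"
  have "x \<in> span N" using x by (rule span_base)
  moreover have "\<forall>f\<in>{1}. scale f x \<in> N" using x by simp
  ultimately show "x \<in> w_cl scale R N" using w_cl_iff[OF vs R N] gvF_one[OF R] by blast
qed

lemma loc_mod_span:
  assumes vs: "vector_space scale" and A: "A \<subseteq> module.span scale B"
  shows "loc_mod scale S A \<subseteq> module.span scale B"
proof
  interpret vector_space scale by (rule vs)
  fix y assume "y \<in> loc_mod scale S A"
  then obtain x s where "y = scale (inverse s) x" "x \<in> A" unfolding loc_mod_def by blast
  then show "y \<in> span B" using A span_scale by blast
qed

lemma submod_mono: "is_submod scale R N \<Longrightarrow> R' \<subseteq> R \<Longrightarrow> is_submod scale R' N"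
  unfolding is_submod_def by blast

theorem lemma3p2:
  fixes scale :: "'k::field \<Rightarrow> 'v::ab_group_add \<Rightarrow> 'v"
    and D S :: "'k set" and M L :: "'v set"
  assumes vs: "vector_space scale"
    and D: "is_subring D" and K: "has_quotient_field D"
    and S: "mult_subset D S"
    and M: "is_submod scale D M" and Mw: "w_cl scale D M = M"
    and L: "is_submod scale D L" and LM: "L \<subseteq> M" and L0: "L \<noteq> {0}"
  shows "(w_cl scale D L = L \<longrightarrow>
            w_cl scale D (loc_mod scale S L \<inter> M) = loc_mod scale S L \<inter> M)
       \<and> (w_cl scale (loc_ring D S) (loc_mod scale S L) = loc_mod scale S L \<longrightarrow>
            w_cl scale D (loc_mod scale S L \<inter> M) = loc_mod scale S L \<inter> M)
       \<and> loc_mod scale S (w_cl scale D L) \<subseteq> w_cl scale (loc_ring D S) (loc_mod scale S L)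
       \<and> w_cl scale (loc_ring D S) (loc_mod scale S (w_cl scale D L))
           = w_cl scale (loc_ring D S) (loc_mod scale S L)"
proof -
  interpret vector_space scale by (rule vs)
  define DS where "DS = loc_ring D S"
  define LS where "LS = loc_mod scale S L"
  define N where "N = LS \<inter> M"
  have DS: "is_subring DS" "D \<subseteq> DS" using loc_ring_subring[OF D S] unfolding DS_def by auto
  have LS: "is_submod scale DS LS" "L \<subseteq> LS" using loc_mod_submod[OF vs D S L] unfolding DS_def LS_def by auto
  have LSD: "is_submod scale D LS" using submod_mono[OF LS(1) DS(2)] .
  have Nmod: "is_submod scale D N" using LSD M unfolding N_def is_submod_def by blast
  have LSspan: "LS \<subseteq> span L" unfolding LS_def by (rule loc_mod_span[OF vs span_superset])
  have spanN: "span N \<subseteq> span L" using span_mono[of N LS] LSspan span_span[of L] span_mono[of LS "span L"]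
    unfolding N_def by blast
  have spanN': "span N \<subseteq> span LS" using span_mono[of N LS] unfolding N_def by blast
  have Nsup: "N \<subseteq> w_cl scale D N" by (rule w_cl_sup[OF vs D Nmod])
  have inM: "x \<in> M" if x: "x \<in> w_cl scale D N" for x
  proof -
    obtain F where x1: "x \<in> span N" and F: "gvF D F" "\<forall>f\<in>F. scale f x \<in> N"
      using w_cl_dest[OF vs D x] by blast
    have "x \<in> span M" using x1 span_mono[of N M] unfolding N_def by blast
    moreover have "\<forall>f\<in>F. scale f x \<in> M" using F unfolding N_def by blast
    ultimately have "x \<in> w_cl scale D M" using w_cl_iff[OF vs D M] F(1) by blast
    then show ?thesis using Mw by simp
  qed
  have P1: "w_cl scale D N = N" if Lw: "w_cl scale D L = L"
  proof
    show "N \<subseteq> w_cl scale D N" by (rule Nsup)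
    show "w_cl scale D N \<subseteq> N"
    proof
      fix x assume x: "x \<in> w_cl scale D N"
      obtain F where x1: "x \<in> span N" and F: "gvF D F" "\<forall>f\<in>F. scale f x \<in> N"
        using w_cl_dest[OF vs D x] by blast
      have "\<forall>f\<in>F. scale f x \<in> loc_mod scale S L" using F(2) unfolding N_def LS_def by blast
      then obtain s where s: "s \<in> S" "\<forall>f\<in>F. scale s (scale f x) \<in> L"
        using loc_mod_fin[OF vs S L, of F "\<lambda>f. scale f x"] F(1) by (auto simp: gvF_def)
      have "\<forall>f\<in>F. scale f (scale s x) \<in> L" using s(2) by (simp add: mult.commute)
      moreover have "scale s x \<in> span L" using x1 spanN span_scale by blast
      ultimately have "scale s x \<in> w_cl scale D L" using w_cl_iff[OF vs D L] F(1) by blast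
      then have "scale s x \<in> L" using Lw by simp
      then have "x \<in> LS" unfolding LS_def loc_mod_iff[OF vs S] using s(1) by blast
      then show "x \<in> N" using inM[OF x] unfolding N_def by blast
    qed
  qed
  have P2: "w_cl scale D N = N" if LSw: "w_cl scale DS LS = LS"
  proof
    show "N \<subseteq> w_cl scale D N" by (rule Nsup)
    show "w_cl scale D N \<subseteq> N"
    proof
      fix x assume x: "x \<in> w_cl scale D N"
      obtain F where x1: "x \<in> span N" and F: "gvF D F" "\<forall>f\<in>F. scale f x \<in> N"
        using w_cl_dest[OF vs D x] by blast
      have "gvF DS F" unfolding DS_def by (rule gvF_loc[OF D S F(1)])
      moreover have "\<forall>f\<in>F. scale f x \<in> LS" using F(2) unfolding N_def by blast
      moreover have "x \<in> span LS" using x1 spanN' by blast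
      ultimately have "x \<in> w_cl scale DS LS" using w_cl_iff[OF vs DS(1) LS(1)] by blast
      then have "x \<in> LS" using LSw by simp
      then show "x \<in> N" using inM[OF x] unfolding N_def by blast
    qed
  qed
  have P3: "loc_mod scale S (w_cl scale D L) \<subseteq> w_cl scale DS LS"
  proof
    fix y assume "y \<in> loc_mod scale S (w_cl scale D L)"
    then obtain s where s: "s \<in> S" "scale s y \<in> w_cl scale D L" using loc_mod_iff[OF vs S] by blast
    obtain F where z1: "scale s y \<in> span L" and F: "gvF D F" "\<forall>f\<in>F. scale f (scale s y) \<in> L"
      using w_cl_dest[OF vs D s(2)] by blast
    have sne: "s \<noteq> 0" using S_facts[OF S s(1)] by blast
    have "y = scale (inverse s) (scale s y)" using sne by simp
    moreover have "scale s y \<in> span LS" using z1 span_mono[OF LS(2)] by blast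
    ultimately have y1: "y \<in> span LS" using span_scale by metis
    have "\<forall>f\<in>F. scale f y \<in> LS"
    proof
      fix f assume "f \<in> F"
      then have "scale s (scale f y) \<in> L" using F(2) by (simp add: mult.commute)
      then show "scale f y \<in> LS" unfolding LS_def loc_mod_iff[OF vs S] using s(1) by blast
    qed
    moreover have "gvF DS F" unfolding DS_def by (rule gvF_loc[OF D S F(1)])
    ultimately show "y \<in> w_cl scale DS LS" using w_cl_iff[OF vs DS(1) LS(1)] y1 by blast
  qed
  have P4: "w_cl scale DS (loc_mod scale S (w_cl scale D L)) = w_cl scale DS LS"
  proof
    have "L \<subseteq> w_cl scale D L" by (rule w_cl_sup[OF vs D L])
    then have "LS \<subseteq> loc_mod scale S (w_cl scale D L)" unfolding LS_def loc_mod_def by blast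
    then show "w_cl scale DS LS \<subseteq> w_cl scale DS (loc_mod scale S (w_cl scale D L))"
      by (rule w_cl_mono[OF vs])
  next
    show "w_cl scale DS (loc_mod scale S (w_cl scale D L)) \<subseteq> w_cl scale DS LS"
    proof
      fix x assume x: "x \<in> w_cl scale DS (loc_mod scale S (w_cl scale D L))"
      obtain G where x1: "x \<in> span (loc_mod scale S (w_cl scale D L))" and G: "gvF DS G"
        "\<forall>g\<in>G. scale g x \<in> loc_mod scale S (w_cl scale D L)"
        using w_cl_dest[OF vs DS(1) x] by blast
      have "\<forall>g\<in>G. \<exists>F. gvF DS F \<and> (\<forall>f\<in>F. scale f (scale g x) \<in> LS)"
      proof
        fix g assume "g \<in> G"
        then have "scale g x \<in> w_cl scale DS LS" using G(2) P3 by blast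
        then show "\<exists>F. gvF DS F \<and> (\<forall>f\<in>F. scale f (scale g x) \<in> LS)"
          using w_cl_dest[OF vs DS(1)] by blast
      qed
      then obtain H where H: "gvF DS H" "\<forall>g\<in>G. \<forall>h\<in>H. scale h (scale g x) \<in> LS"
        using gvF_family[OF vs DS(1) LS(1), of G x] G(1) by (auto simp: gvF_def)
      let ?P = "(\<lambda>(f,g). f * g) ` (H \<times> G)"
      have "gvF DS ?P" by (rule gvF_mult[OF DS(1) H(1) G(1)])
      moreover have "\<forall>p\<in>?P. scale p x \<in> LS"
      proof
        fix p assume "p \<in> ?P"
        then obtain h g where p: "p = h * g" "h \<in> H" "g \<in> G" by auto
        then show "scale p x \<in> LS" using H(2) by simp
      qed
      moreover have "x \<in> span LS"
      proof -
        have "w_cl scale D L \<subseteq> span LS"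
          using w_cl_dest[OF vs D] span_mono[OF LS(2)] by blast
        then have "loc_mod scale S (w_cl scale D L) \<subseteq> span LS" by (rule loc_mod_span[OF vs])
        then have "span (loc_mod scale S (w_cl scale D L)) \<subseteq> span LS"
          using span_mono span_span by metis
        then show ?thesis using x1 by blast
      qed
      ultimately show "x \<in> w_cl scale DS LS" using w_cl_iff[OF vs DS(1) LS(1)] by blast
    qed
  qed
  show ?thesis using P1 P2 P3 P4 unfolding N_def LS_def DS_def by blast
qed

end
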